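(* Let $G$ be a finite 3-regular graph with edge set $E(G)$, let $k\ge0$ be an integer, and let $d$ be an integer-valued cellular 1-cochain on $G$ with $d(e)\le k$ for every oriented edge $e$. Let $G'$ be the $\mathbb{Z}$-fold cover of $G$ constructed from $d$. Then there is a number $R$ depending only on $k$ and $|E(G)|$ such that $G'$ contains a simple loop of length at most $2R$.
   Context: A cellular 1-cochain assigns an integer $d(e)$ to each oriented edge $e$ with $d(\bar e)=-d(e)$ for the reversed edge $\bar e$ (so the hypothesis means $|d(e)|\le k$ for all edges). The $\mathbb{Z}$-fold cover $G'$ has vertex set $V(G)\times\mathbb{Z}$, and each edge $e$ of $G$ from $w$ to $v$ lifts to edges from $(w,j)$ to $(v,j+d(e))$ for all $j\in\mathbb{Z}$. Each edge has length $1$; a simple loop is a closed edge path with no repeated vertices. *)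

theory Defs
  imports Main
begin

text \<open>A finite (multi)graph given by oriented edges (darts) D, with tail src, head tgt
  and orientation reversal rv (a fixed-point-free involution swapping tail and head).
  Loops and multiple edges are allowed. The undirected edge set E(G) has card D div 2 elements.\<close>

definition dart_graph :: "nat set \<Rightarrow> nat set \<Rightarrow> (nat \<Rightarrow> nat) \<Rightarrow> (nat \<Rightarrow> nat) \<Rightarrow> (nat \<Rightarrow> nat) \<Rightarrow> bool" where
  "dart_graph V D src tgt rv \<longleftrightarrow> finite V \<and> finite D \<and>
     (\<forall>e\<in>D. src e \<in> V \<and> tgt e \<in> V \<and> rv e \<in> D \<and> rv e \<noteq> e \<and> rv (rv e) = e
            \<and> src (rv e) = tgt e \<and> tgt (rv e) = src e)"

text \<open>3-regular: every vertex has exactly three oriented edges leaving it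
  (a loop contributes two).\<close>
definition cubic :: "nat set \<Rightarrow> nat set \<Rightarrow> (nat \<Rightarrow> nat) \<Rightarrow> bool" where
  "cubic V D src \<longleftrightarrow> (\<forall>v\<in>V. card {e\<in>D. src e = v} = 3)"

definition cochain1 :: "nat set \<Rightarrow> (nat \<Rightarrow> nat) \<Rightarrow> (nat \<Rightarrow> int) \<Rightarrow> bool" where
  "cochain1 D rv d \<longleftrightarrow> (\<forall>e\<in>D. d (rv e) = - d e)"

text \<open>Oriented edges of the Z-fold cover G': pairs (e,j) meaning the lift of e from
  (src e, j) to (tgt e, j + d e).\<close>
definition cov_tail :: "(nat \<Rightarrow> nat) \<Rightarrow> nat \<times> int \<Rightarrow> nat \<times> int" where
  "cov_tail src p = (src (fst p), snd p)"

definition cov_head :: "(nat \<Rightarrow> nat) \<Rightarrow> (nat \<Rightarrow> int) \<Rightarrow> nat \<times> int \<Rightarrow> nat \<times> int" where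
  "cov_head tgt d p = (tgt (fst p), snd p + d (fst p))"

definition cov_rev :: "(nat \<Rightarrow> nat) \<Rightarrow> (nat \<Rightarrow> int) \<Rightarrow> nat \<times> int \<Rightarrow> nat \<times> int" where
  "cov_rev rv d p = (rv (fst p), snd p + d (fst p))"

text \<open>A simple loop in G': a nonempty closed edge path with no repeated vertices and
  no repeated (undirected) edges, so that it is an embedded circle (no backtracking).\<close>
definition simple_loop_cover ::
  "nat set \<Rightarrow> (nat \<Rightarrow> nat) \<Rightarrow> (nat \<Rightarrow> nat) \<Rightarrow> (nat \<Rightarrow> nat) \<Rightarrow> (nat \<Rightarrow> int) \<Rightarrow> (nat \<times> int) list \<Rightarrow> bool" where
  "simple_loop_cover D src tgt rv d ps \<longleftrightarrow>
     ps \<noteq> [] \<and> fst ` set ps \<subseteq> D \<and>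
     (\<forall>i < length ps. cov_head tgt d (ps ! i) = cov_tail src (ps ! (Suc i mod length ps))) \<and>
     distinct (map (cov_tail src) ps) \<and>
     distinct ps \<and>
     (\<forall>i < length ps. \<forall>j < length ps. ps ! j \<noteq> cov_rev rv d (ps ! i))"

end

theory Submission
  imports Defs
begin

fun lift :: "(nat \<Rightarrow> int) \<Rightarrow> int \<Rightarrow> nat list \<Rightarrow> (nat \<times> int) list" where
  "lift d h [] = []"
| "lift d h (e # w) = (e, h) # lift d (h + d e) w"

lemma lift_fst: "map fst (lift d h w) = w"
  by (induction w arbitrary: h) auto

lemma lift_len: "length (lift d h w) = length w"
  by (induction w arbitrary: h) auto

lemma lift_set: "fst ` set (lift d h w) = set w"
  by (metis lift_fst set_map)

lemma lift_head: "w \<noteq> [] \<Longrightarrow> cov_head tgt d (last (lift d h w)) = (tgt (last w), h + sum_list (map d w))"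
proof (induction w arbitrary: h)
  case Nil then show ?case by simp
next
  case (Cons e w)
  show ?case
  proof (cases "w = []")
    case True then show ?thesis by (simp add: cov_head_def)
  next
    case False
    then have "lift d (h + d e) w \<noteq> []" by (metis lift_len length_0_conv)
    then show ?thesis using Cons.IH[OF False, of "h + d e"] False by (simp add: algebra_simps)
  qed
qed

lemma sum_bound: "\<forall>e\<in>set w. \<bar>d e\<bar> \<le> (k::int) \<Longrightarrow> \<bar>sum_list (map d w)\<bar> \<le> k * int (length w)"
proof (induction w)
  case Nil then show ?case by simp
next
  case (Cons e w)
  then have "\<bar>d e\<bar> \<le> k" "\<bar>sum_list (map d w)\<bar> \<le> k * int (length w)" by auto
  then show ?case by (simp add: algebra_simps)
qed

lemma sq_le_pow: "4 \<le> n \<Longrightarrow> n * n \<le> (2::nat) ^ n"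
proof (induction n rule: dec_induct)
  case base then show ?case by simp
next
  case (step n)
  have "Suc n * Suc n = n * n + 2 * n + 1" by simp
  also have "\<dots> \<le> n * n + n * n"
  proof -
    have "4 * n \<le> n * n" using mult_le_mono1[OF step(1), of n] by simp
    then show ?thesis using step(1) by linarith
  qed
  also have "\<dots> \<le> 2 ^ Suc n" using step(3) by simp
  finally show ?case .
qed

locale cg =
  fixes V :: "nat set" and D :: "nat set" and src tgt rv :: "nat \<Rightarrow> nat" and d :: "nat \<Rightarrow> int"
  assumes dg: "dart_graph V D src tgt rv" and cc: "cochain1 D rv d"
begin

abbreviation T where "T \<equiv> cov_tail src"
abbreviation H where "H \<equiv> cov_head tgt d"
abbreviation Rv where "Rv \<equiv> cov_rev rv d"

definition stp where "stp p q \<longleftrightarrow> H p = T q \<and> q \<noteq> Rv p"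
definition cwalk where "cwalk ps \<longleftrightarrow> fst ` set ps \<subseteq> D \<and> successively stp ps"

lemma Rv_Rv: "fst p \<in> D \<Longrightarrow> Rv (Rv p) = p"
  using dg cc unfolding dart_graph_def cochain1_def cov_rev_def by (cases p) auto
lemma T_Rv: "fst p \<in> D \<Longrightarrow> T (Rv p) = H p"
  using dg unfolding dart_graph_def cov_rev_def cov_tail_def cov_head_def by (cases p) auto
lemma H_Rv: "fst p \<in> D \<Longrightarrow> H (Rv p) = T p"
  using dg cc unfolding dart_graph_def cochain1_def cov_rev_def cov_tail_def cov_head_def by (cases p) auto
lemma Rv_neq: "fst p \<in> D \<Longrightarrow> Rv p \<noteq> p"
  using dg unfolding dart_graph_def cov_rev_def by (cases p) auto
lemma Rv_D: "fst p \<in> D \<Longrightarrow> fst (Rv p) \<in> D"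
  using dg unfolding dart_graph_def cov_rev_def by (cases p) auto

lemma lemA:
  assumes cw: "cwalk ps" and ne: "ps \<noteq> []" and cl: "H (last ps) = T (hd ps)"
  shows "\<exists>qs. simple_loop_cover D src tgt rv d qs \<and> length qs \<le> length ps"
proof -
  define n where "n = length ps"
  have n0: "n > 0" using ne n_def by simp
  have Dn: "\<And>i. i < n \<Longrightarrow> fst (ps!i) \<in> D" using cw unfolding cwalk_def n_def
    by (meson image_subset_iff nth_mem)
  have S: "\<And>i. Suc i < n \<Longrightarrow> stp (ps!i) (ps!Suc i)"
    using cw unfolding cwalk_def n_def by (simp add: successively_nth)
  define t where "t i = (if i < n then T (ps!i) else T (ps!0))" for i
  have Ht: "H (ps!i) = t (Suc i)" if "i < n" for i
  proof (cases "Suc i < n")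
    case True then show ?thesis using S[OF True] unfolding stp_def t_def by simp
  next
    case False
    then have "i = n - 1" using that by simp
    then have "ps!i = last ps" using ne n_def by (simp add: last_conv_nth)
    moreover have "hd ps = ps!0" using ne by (simp add: hd_conv_nth)
    ultimately show ?thesis using cl False unfolding t_def by simp
  qed
  define P where "P g \<longleftrightarrow> (\<exists>i j. i < j \<and> j \<le> n \<and> t i = t j \<and> j - i = g)" for g
  have "P n" unfolding P_def t_def using n0 by (rule_tac x=0 in exI, rule_tac x=n in exI) auto
  define g where "g = (LEAST g. P g)"
  have Pg: "P g" unfolding g_def using \<open>P n\<close> by (rule LeastI)
  have gmin: "\<And>g'. P g' \<Longrightarrow> g \<le> g'" unfolding g_def by (rule Least_le)
  obtain i j where ij: "i < j" "j \<le> n" "t i = t j" "j - i = g" using Pg P_def by blast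
  define qs where "qs = take g (drop i ps)"
  have lq: "length qs = g" using ij n_def qs_def by simp
  have g0: "g > 0" using ij by simp
  have qn: "\<And>a. a < g \<Longrightarrow> qs!a = ps!(i+a)" using ij n_def qs_def by simp
  have tq: "T (qs!a) = t (i+a)" if "a < g" for a
  proof -
    have "i + a < n" using that ij(1,2,4) by linarith
    then show ?thesis using qn[OF that] unfolding t_def by simp
  qed
  have cons: "H (qs!a) = T (qs!(Suc a mod g))" if "a < g" for a
  proof (cases "Suc a < g")
    case True
    then show ?thesis using qn[OF that] Ht[of "i+a"] tq[OF True] ij by simp
  next
    case False
    then have "Suc a = g" using that by simp
    then have "Suc (i+a) = j" "i + a < n" using ij by linarith+
    moreover have "Suc a mod g = 0" using \<open>Suc a = g\<close> by simp
    ultimately show ?thesis using qn[OF that] Ht[of "i+a"] tq[OF g0] ij by simp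
  qed
  have tdist: "T (qs!a) \<noteq> T (qs!b)" if "a < g" "b < g" "a < b" for a b
  proof
    assume "T (qs!a) = T (qs!b)"
    then have "t (i+a) = t (i+b)" using tq that by simp
    then have "P (b - a)" unfolding P_def using that ij
      by (rule_tac x="i+a" in exI, rule_tac x="i+b" in exI) auto
    then show False using gmin[of "b-a"] that by simp
  qed
  have dist: "distinct (map T qs)"
    unfolding distinct_conv_nth using tdist lq
    by (metis length_map linorder_neqE_nat nth_map)
  have norev: "qs!b \<noteq> Rv (qs!a)" if ab: "a < g" "b < g" for a b
  proof
    assume eq: "qs!b = Rv (qs!a)"
    have Da: "fst (qs!a) \<in> D" using qn Dn ab ij by simp
    have "T (qs!b) = T (qs!(Suc a mod g))" using eq T_Rv[OF Da] cons[OF ab(1)] by simp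
    moreover have "Suc a mod g < g" using g0 by simp
    ultimately have b: "b = Suc a mod g" using dist ab lq
      by (metis length_map nth_eq_iff_index_eq nth_map)
    show False
    proof (cases "Suc a < g")
      case True
      then have "b = Suc a" using b by simp
      then show ?thesis using eq S[of "i+a"] qn ab True ij unfolding stp_def by simp
    next
      case False
      then have ag: "Suc a = g" using ab by simp
      then have b0: "b = 0" using b by simp
      have e2: "ps!i = Rv (ps!(i+a))" using eq b0 qn ab g0 by simp
      have Dia: "fst (ps!(i+a)) \<in> D" using Dn ab ij by simp
      show ?thesis
      proof (cases "a = 0")
        case True then show ?thesis using e2 Rv_neq[OF Dia] by simp
      next
        case a0: False
        show ?thesis
        proof (cases "a = 1")
          case True
          then have "ps!(Suc i) = Rv (ps!i)" using e2 Rv_Rv[OF Dia] by simp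
          then show ?thesis using S[of i] ag True ij unfolding stp_def by simp
        next
          case False
          have "t (Suc i) = H (ps!i)" using Ht[of i] ij by simp
          also have "\<dots> = T (ps!(i+a))" using e2 H_Rv[OF Dia] by simp
          also have "\<dots> = t (i+a)"
          proof -
            have "i + a < n" using ab ij(1,2,4) by linarith
            then show ?thesis unfolding t_def by simp
          qed
          finally have "P (a - 1)" unfolding P_def using a0 False ab ij
            by (rule_tac x="Suc i" in exI, rule_tac x="i+a" in exI) auto
          then show ?thesis using gmin[of "a-1"] ag by simp
        qed
      qed
    qed
  qed
  have "simple_loop_cover D src tgt rv d qs"
    unfolding simple_loop_cover_def
  proof (intro conjI)
    show "qs \<noteq> []" using lq g0 by auto
    show "fst ` set qs \<subseteq> D" using cw unfolding cwalk_def qs_def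
      by (meson image_mono in_set_dropD in_set_takeD subset_iff)
    show "\<forall>a<length qs. H (qs ! a) = T (qs ! (Suc a mod length qs))" using cons lq by simp
    show "distinct (map T qs)" by (rule dist)
    show "distinct qs" using dist by (simp add: distinct_map)
    show "\<forall>a<length qs. \<forall>b<length qs. qs ! b \<noteq> Rv (qs ! a)" using norev lq by simp
  qed
  moreover have "length qs \<le> length ps" using lq ij n_def by simp
  ultimately show ?thesis by blast
qed

lemma stp_rev: "fst x \<in> D \<Longrightarrow> fst y \<in> D \<Longrightarrow> stp x y \<Longrightarrow> stp (Rv y) (Rv x)"
  unfolding stp_def using T_Rv H_Rv Rv_Rv by metis

lemma lemB:
  "cwalk w1 \<Longrightarrow> cwalk w2 \<Longrightarrow> length w1 = length w2 \<Longrightarrow> w1 \<noteq> w2 \<Longrightarrow>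
   T (hd w1) = T (hd w2) \<Longrightarrow> H (last w1) = H (last w2) \<Longrightarrow>
   \<exists>c. cwalk c \<and> c \<noteq> [] \<and> H (last c) = T (hd c) \<and> length c \<le> 2 * length w1"
proof (induction "length w1" arbitrary: w1 w2 rule: less_induct)
  case less
  have ne1: "w1 \<noteq> []" and ne2: "w2 \<noteq> []" using less.prems by auto
  show ?case
  proof (cases "hd w1 = hd w2")
    case True
    obtain p r1 r2 where w1: "w1 = p # r1" and w2: "w2 = p # r2"
      using ne1 ne2 True by (metis list.collapse)
    have r: "r1 \<noteq> r2" "length r1 = length r2" using less.prems w1 w2 by auto
    then have r1: "r1 \<noteq> []" "r2 \<noteq> []" by auto
    have c1: "cwalk r1" "cwalk r2" using less.prems w1 w2 unfolding cwalk_def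
      by (auto simp: successively_Cons)
    have "stp p (hd r1)" "stp p (hd r2)" using less.prems w1 w2 r1 unfolding cwalk_def
      by (auto simp: successively_Cons)
    then have "T (hd r1) = T (hd r2)" unfolding stp_def by simp
    moreover have "H (last r1) = H (last r2)" using less.prems w1 w2 r1 by simp
    ultimately obtain c where "cwalk c \<and> c \<noteq> [] \<and> H (last c) = T (hd c) \<and> length c \<le> 2 * length r1"
      using less.hyps[of r1 r2] r c1 w1 by auto
    then show ?thesis using w1 by auto
  next
    case hdF: False
    show ?thesis
    proof (cases "last w1 = last w2")
      case True
      define b1 where "b1 = butlast w1"
      define b2 where "b2 = butlast w2"
      have w1: "b1 @ [last w1] = w1" using ne1 b1_def by simp
      have w2: "b2 @ [last w1] = w2" using ne2 True b2_def by simp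
      have r2: "length b1 = length b2" using less.prems(3) b1_def b2_def by simp
      have r1: "b1 \<noteq> b2"
      proof
        assume "b1 = b2"
        then have "w1 = w2" using w1 w2 by simp
        then show False using less.prems(4) by simp
      qed
      have nb: "b1 \<noteq> []" "b2 \<noteq> []" using r1 r2 by auto
      have sw1: "successively stp (b1 @ [last w1])" "successively stp (b2 @ [last w1])"
        using less.prems(1,2) unfolding w1 w2 cwalk_def by simp_all
      have ss: "set b1 \<subseteq> set w1" "set b2 \<subseteq> set w2" unfolding b1_def b2_def
        by (auto dest: in_set_butlastD)
      have "fst ` set b1 \<subseteq> D" "fst ` set b2 \<subseteq> D"
        using less.prems(1,2) ss unfolding cwalk_def by (meson image_mono order_trans)+
      moreover have "successively stp b1" "successively stp b2"
        using sw1 unfolding successively_append_iff by simp_all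
      ultimately have c1: "cwalk b1" "cwalk b2" unfolding cwalk_def by simp_all
      have "stp (last b1) (last w1)" "stp (last b2) (last w1)" using sw1 nb
        by (auto simp: successively_append_iff)
      then have "H (last b1) = H (last b2)" unfolding stp_def by simp
      moreover have "T (hd b1) = T (hd b2)"
      proof -
        have "hd w1 = hd b1" "hd w2 = hd b2" using nb w1 w2 by (metis hd_append2)+
        then show ?thesis using less.prems(5) by simp
      qed
      moreover have lb: "length b1 < length w1" using b1_def ne1 by simp
      ultimately obtain c where "cwalk c \<and> c \<noteq> [] \<and> H (last c) = T (hd c) \<and> length c \<le> 2 * length b1"
        using less.hyps[of b1 b2] r1 r2 c1 by blast
      moreover have "2 * length b1 \<le> 2 * length w1" using lb by simp
      ultimately show ?thesis by (meson order_trans)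
    next
      case lastF: False
      define c where "c = w1 @ rev (map Rv w2)"
      have D2: "fst ` set w2 \<subseteq> D" "fst ` set w1 \<subseteq> D" using less.prems unfolding cwalk_def by auto
      have "fst ` set (map Rv w2) \<subseteq> D" using D2 Rv_D by auto
      then have cD: "fst ` set c \<subseteq> D" using D2 c_def by auto
      have s2: "successively stp (rev (map Rv w2))"
        unfolding successively_rev successively_map
      proof (rule successively_mono[of stp])
        show "successively stp w2" using less.prems(2) cwalk_def by simp
        fix x y assume "x \<in> set w2" "y \<in> set w2" "stp x y"
        then show "stp (Rv y) (Rv x)" using D2 stp_rev by blast
      qed
      have lw: "fst (last w1) \<in> D" "fst (last w2) \<in> D" using D2 ne1 ne2 by auto
      have "stp (last w1) (Rv (last w2))"
        unfolding stp_def
      proof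
        show "H (last w1) = T (Rv (last w2))" using less.prems(6) T_Rv[OF lw(2)] by simp
        show "Rv (last w2) \<noteq> Rv (last w1)" using lastF Rv_Rv lw by metis
      qed
      then have "successively stp c" using s2 less.prems ne2 unfolding c_def cwalk_def
        by (auto simp: successively_append_iff hd_rev last_map)
      then have cwc: "cwalk c" using cD cwalk_def by simp
      have hdD: "fst (hd w2) \<in> D" using D2 ne2 by auto
      have "H (Rv (hd w2)) = T (hd w2)" by (rule H_Rv[OF hdD])
      moreover have "H (last c) = T (hd c)" using ne1 ne2 less.prems(5) \<open>H (Rv (hd w2)) = T (hd w2)\<close> unfolding c_def
        by (simp add: last_rev hd_map)
      moreover have "length c \<le> 2 * length w1" using less.prems c_def by simp
      moreover have "c \<noteq> []" using c_def ne1 by simp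
      ultimately show ?thesis using cwc by blast
    qed
  qed
qed

definition gstep where "gstep e f \<longleftrightarrow> tgt e = src f \<and> f \<noteq> rv e"
definition gw where "gw e0 L = {w. length w = Suc L \<and> hd w = e0 \<and> set w \<subseteq> D \<and> successively gstep w}"
definition nxt where "nxt e = {f\<in>D. src f = tgt e \<and> f \<noteq> rv e}"

lemma lift_walk: "successively gstep w \<Longrightarrow> set w \<subseteq> D \<Longrightarrow> cwalk (lift d h w)"
proof (induction w arbitrary: h)
  case Nil then show ?case by (simp add: cwalk_def)
next
  case (Cons e w)
  note IH0 = Cons.IH and P0 = Cons.prems
  show ?case
  proof (cases w)
    case Nil then show ?thesis using P0 by (simp add: cwalk_def)
  next
    case (Cons f w')
    have IH: "cwalk (lift d (h + d e) w)" using IH0[of "h + d e"] P0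
      by (auto simp: successively_Cons)
    have "gstep e f" using P0 Cons by simp
    then have "stp (e, h) (f, h + d e)"
      unfolding gstep_def stp_def cov_head_def cov_tail_def cov_rev_def by simp
    then show ?thesis using IH Cons P0 unfolding cwalk_def by simp
  qed
qed

lemma nxt_card:
  assumes cub: "cubic V D src" and e: "e \<in> D"
  shows "finite (nxt e) \<and> card (nxt e) = 2"
proof -
  have fD: "finite D" using dg dart_graph_def by simp
  have "tgt e \<in> V" "rv e \<in> D" "src (rv e) = tgt e" using dg e unfolding dart_graph_def by auto
  then have c3: "card {f\<in>D. src f = tgt e} = 3" "rv e \<in> {f\<in>D. src f = tgt e}"
    using cub unfolding cubic_def by auto
  have "nxt e = {f\<in>D. src f = tgt e} - {rv e}" unfolding nxt_def by auto
  then show ?thesis using c3 fD by simp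
qed

lemma gw_card:
  assumes cub: "cubic V D src" and e0: "e0 \<in> D"
  shows "finite (gw e0 L) \<and> card (gw e0 L) = 2 ^ L"
proof (induction L)
  case 0
  have "gw e0 0 = {[e0]}"
  proof
    show "gw e0 0 \<subseteq> {[e0]}" unfolding gw_def by (auto simp: length_Suc_conv)
    show "{[e0]} \<subseteq> gw e0 0" unfolding gw_def using e0 by simp
  qed
  then show ?case by simp
next
  case (Suc L)
  let ?f = "\<lambda>(w, f). w @ [f]"
  let ?S = "SIGMA w:gw e0 L. nxt (last w)"
  have eq: "gw e0 (Suc L) = ?f ` ?S"
  proof
    show "gw e0 (Suc L) \<subseteq> ?f ` ?S"
    proof
      fix w assume w: "w \<in> gw e0 (Suc L)"
      define b where "b = butlast w"
      have wl: "length w = Suc (Suc L)" "hd w = e0" "set w \<subseteq> D" "successively gstep w"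
        using w unfolding gw_def by auto
      have "w \<noteq> []" using wl(1) by auto
      then have wb: "b @ [last w] = w" unfolding b_def by (rule append_butlast_last_id)
      have lb: "length b = Suc L" using wl(1) b_def by simp
      then have bne: "b \<noteq> []" by auto
      have sw: "successively gstep (b @ [last w])" using wl(4) unfolding wb .
      have "set (b @ [last w]) \<subseteq> D" using wl(3) unfolding wb .
      then have bD: "set b \<subseteq> D" "last w \<in> D" by auto
      have "hd (b @ [last w]) = e0" using wl(2) unfolding wb .
      then have "hd b = e0" using bne by simp
      moreover have "successively gstep b" using sw by (simp add: successively_append_iff)
      ultimately have "b \<in> gw e0 L" using lb bD unfolding gw_def by blast
      moreover have "last w \<in> nxt (last b)" using sw bne bD unfolding successively_append_iff nxt_def gstep_def
        by auto
      ultimately have "(b, last w) \<in> ?S" by blast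
      moreover have "w = ?f (b, last w)" using wb by simp
      ultimately show "w \<in> ?f ` ?S" by blast
    qed
    show "?f ` ?S \<subseteq> gw e0 (Suc L)"
    proof
      fix x assume "x \<in> ?f ` ?S"
      then obtain w f where wf: "w \<in> gw e0 L" "f \<in> nxt (last w)" "x = w @ [f]" by auto
      then have "w \<noteq> []" unfolding gw_def by auto
      then show "x \<in> gw e0 (Suc L)" using wf unfolding gw_def nxt_def gstep_def
        by (auto simp: successively_append_iff)
    qed
  qed
  have inj: "inj_on ?f ?S" by (rule inj_onI) auto
  have fin: "\<forall>w\<in>gw e0 L. finite (nxt (last w)) \<and> card (nxt (last w)) = 2"
  proof
    fix w assume "w \<in> gw e0 L"
    then have "length w = Suc L" "set w \<subseteq> D" unfolding gw_def by auto
    then have "w \<noteq> []" "set w \<subseteq> D" by auto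
    then have "last w \<in> D" using last_in_set[of w] by blast
    then show "finite (nxt (last w)) \<and> card (nxt (last w)) = 2" using nxt_card[OF cub] by blast
  qed
  have fL: "finite (gw e0 L)" "card (gw e0 L) = 2 ^ L" using Suc by auto
  have finS: "finite ?S" using fL(1) fin by (intro finite_SigmaI) auto
  have f1: "finite (gw e0 (Suc L))" unfolding eq using finS by (rule finite_imageI)
  have "card (gw e0 (Suc L)) = card ?S" unfolding eq using inj by (rule card_image)
  also have "\<dots> = (\<Sum>w\<in>gw e0 L. card (nxt (last w)))" using fL(1) fin by (intro card_SigmaI) auto
  also have "\<dots> = (\<Sum>w\<in>gw e0 L. 2)" using fin by (intro sum.cong) auto
  also have "\<dots> = 2 ^ Suc L" using fL by simp
  finally show ?case using f1 by simp
qed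

lemma cardV:
  assumes cub: "cubic V D src"
  shows "card D = 3 * card V"
proof -
  have fV: "finite V" and fD: "finite D" using dg dart_graph_def by auto
  have eq: "D = (\<Union>v\<in>V. {e\<in>D. src e = v})" using dg unfolding dart_graph_def by auto
  have "card D = (\<Sum>v\<in>V. card {e\<in>D. src e = v})"
    by (subst eq, rule card_UN_disjoint) (use fV fD in auto)
  also have "\<dots> = (\<Sum>v\<in>V. 3)" using cub unfolding cubic_def by (intro sum.cong) auto
  finally show ?thesis by simp
qed

lemma lemC:
  assumes cub: "cubic V D src" and V: "V \<noteq> {}" and kb: "\<forall>e\<in>D. d e \<le> int k"
    and big: "card V * (2 * k * Suc L + 1) < 2 ^ L"
  shows "\<exists>qs. simple_loop_cover D src tgt rv d qs \<and> length qs \<le> 2 * Suc L"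
proof -
  obtain v where v: "v \<in> V" using V by auto
  have "card {e\<in>D. src e = v} = 3" using cub v unfolding cubic_def by auto
  then have "{e\<in>D. src e = v} \<noteq> {}" by (metis card.empty zero_neq_numeral)
  then obtain e0 where e0: "e0 \<in> D" by auto
  have ab: "\<bar>d e\<bar> \<le> int k" if "e \<in> D" for e
  proof -
    have "rv e \<in> D" "d (rv e) = - d e" using dg cc that unfolding dart_graph_def cochain1_def by auto
    then have "d (rv e) \<le> int k" "d e \<le> int k" using kb that by auto
    then show ?thesis using \<open>d (rv e) = - d e\<close> by linarith
  qed
  define F where "F w = H (last (lift d 0 w))" for w
  define B where "B = V \<times> {-(int k * int (Suc L)) .. int k * int (Suc L)}"
  have FB: "F ` gw e0 L \<subseteq> B"
  proof
    fix x assume "x \<in> F ` gw e0 L"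
    then obtain w where w: "w \<in> gw e0 L" "x = F w" by auto
    then have wl: "length w = Suc L" "set w \<subseteq> D" unfolding gw_def by auto
    then have wne: "w \<noteq> []" by auto
    have Fw: "F w = (tgt (last w), sum_list (map d w))" unfolding F_def using lift_head[OF wne, of tgt d 0] by simp
    have "last w \<in> D" using wl wne last_in_set[of w] by blast
    then have "tgt (last w) \<in> V" using dg unfolding dart_graph_def by auto
    moreover have "\<bar>sum_list (map d w)\<bar> \<le> int k * int (length w)"
      using wl ab by (intro sum_bound) auto
    ultimately show "x \<in> B" using w(2) Fw wl unfolding B_def by auto
  qed
  have fV: "finite V" using dg dart_graph_def by auto
  have fB: "finite B" unfolding B_def using fV by simp
  have "card B = card V * nat (int k * int (Suc L) - - (int k * int (Suc L)) + 1)"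
    unfolding B_def card_cartesian_product by simp
  also have "nat (int k * int (Suc L) - - (int k * int (Suc L)) + 1) = 2 * k * Suc L + 1"
    by (simp add: nat_add_distrib nat_mult_distrib)
  finally have cB: "card B = card V * (2 * k * Suc L + 1)" .
  have gwc: "finite (gw e0 L)" "card (gw e0 L) = 2 ^ L" using gw_card[OF cub e0] by auto
  have "\<not> inj_on F (gw e0 L)"
  proof
    assume "inj_on F (gw e0 L)"
    then have "card (gw e0 L) \<le> card B" using card_inj_on_le FB fB by blast
    then show False using gwc cB big by simp
  qed
  then obtain w1 w2 where ww: "w1 \<in> gw e0 L" "w2 \<in> gw e0 L" "w1 \<noteq> w2" "F w1 = F w2"
    unfolding inj_on_def by blast
  have w1: "length w1 = Suc L" "hd w1 = e0" "set w1 \<subseteq> D" "successively gstep w1"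
    using ww(1) unfolding gw_def by auto
  have w2: "length w2 = Suc L" "hd w2 = e0" "set w2 \<subseteq> D" "successively gstep w2"
    using ww(2) unfolding gw_def by auto
  define c1 where "c1 = lift d 0 w1"
  define c2 where "c2 = lift d 0 w2"
  have cw: "cwalk c1" "cwalk c2" unfolding c1_def c2_def using lift_walk w1 w2 by auto
  have lc: "length c1 = Suc L" "length c2 = Suc L" unfolding c1_def c2_def using w1 w2 lift_len by auto
  have "c1 \<noteq> c2" unfolding c1_def c2_def using ww(3) lift_fst by metis
  moreover have "T (hd c1) = T (hd c2)"
  proof -
    have "w1 = e0 # tl w1" "w2 = e0 # tl w2" using w1 w2 by (metis list.collapse list.size(3) nat.distinct(1))+
    then have "hd c1 = (e0, 0)" "hd c2 = (e0, 0)" unfolding c1_def c2_def by (metis lift.simps(2) list.sel(1))+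
    then show ?thesis by simp
  qed
  moreover have "H (last c1) = H (last c2)" using ww(4) unfolding F_def c1_def c2_def by simp
  ultimately obtain c where c: "cwalk c" "c \<noteq> []" "H (last c) = T (hd c)" "length c \<le> 2 * length c1"
    using lemB[OF cw] lc by metis
  then obtain qs where "simple_loop_cover D src tgt rv d qs" "length qs \<le> length c" using lemA by blast
  then show ?thesis using c(4) lc by auto
qed

end

definition Lf :: "nat \<Rightarrow> nat \<Rightarrow> nat" where "Lf k m = 2 * (m * (2 * k + 1)) + 4"

lemma Lf_big: "m * (2 * k * Suc (Lf k m) + 1) < 2 ^ Lf k m"
proof -
  define c where "c = m * (2 * k + 1)"
  define L where "L = Lf k m"
  have L: "L = 2 * c + 4" unfolding L_def Lf_def c_def by simp
  have "m * (2 * k * Suc L + 1) \<le> m * ((2 * k + 1) * Suc L)"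
    by (intro mult_le_mono2) (simp add: algebra_simps)
  also have "\<dots> = c * Suc L" unfolding c_def by (simp add: algebra_simps)
  also have "\<dots> < L * L"
  proof -
    have "c * Suc L \<le> c * L + c * L" using L by (simp add: algebra_simps)
    also have "\<dots> < L * L" using L by (simp add: algebra_simps)
    finally show ?thesis .
  qed
  also have "\<dots> \<le> 2 ^ L" using sq_le_pow[of L] L by simp
  finally show ?thesis unfolding L_def .
qed

theorem lemma2p3:
  "\<exists>R :: nat \<Rightarrow> nat \<Rightarrow> nat. \<forall>(k::nat) V D src tgt rv (d :: nat \<Rightarrow> int).
     V \<noteq> {} \<and> dart_graph V D src tgt rv \<and> cubic V D src \<and> cochain1 D rv d \<and>
     (\<forall>e\<in>D. d e \<le> int k)
     \<longrightarrow> (\<exists>ps. simple_loop_cover D src tgt rv d ps \<and> length ps \<le> 2 * R k (card D div 2))"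
proof (rule exI[of _ "\<lambda>k m. Suc (Lf k m)"], intro allI impI, elim conjE)
  fix k V D src tgt rv and d :: "nat \<Rightarrow> int"
  assume V: "V \<noteq> {}" and dg: "dart_graph V D src tgt rv" and cub: "cubic V D src"
    and cc: "cochain1 D rv d" and kb: "\<forall>e\<in>D. d e \<le> int k"
  interpret cg V D src tgt rv d using dg cc by unfold_locales
  define m where "m = card D div 2"
  have "card D = 3 * card V" using cardV[OF cub] .
  then have vm: "card V \<le> m" unfolding m_def by simp
  have "card V * (2 * k * Suc (Lf k m) + 1) \<le> m * (2 * k * Suc (Lf k m) + 1)"
    using vm by (rule mult_le_mono1)
  also have "\<dots> < 2 ^ Lf k m" by (rule Lf_big)
  finally have big: "card V * (2 * k * Suc (Lf k m) + 1) < 2 ^ Lf k m" .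
  show "\<exists>ps. simple_loop_cover D src tgt rv d ps \<and> length ps \<le> 2 * Suc (Lf k (card D div 2))"
    using lemC[OF cub V kb big] unfolding m_def by simp
qed

end
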